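(* Let $P=\{x\in\mathbb{R}^n: Ax\ge b\}$ with rational data be full-dimensional and pointed, $c\in\mathbb{R}^n$, and $\bar x$ a basic optimal solution of $\min\{c^\top x: x\in P\}$. Let $\mathcal{T}$ be finite, $P^t=\{x\in P: D^tx\ge D^t_0\}$ the terms of a disjunction, $P_D=\operatorname{cl}\operatorname{conv}(\bigcup_tP^t)$, with $\bar x\notin P_D$. For each $t$, let $p^t$ be a basic optimal solution of $\min\{c^\top x: x\in P^t\}$, $C^t$ the basis cone at $p^t$ with extreme rays $r^{t1},\dots,r^{tn}$, and $P_D^0=\operatorname{conv}\{p^t:t\in\mathcal{T}\}+\operatorname{cone}\{r^{tj}: t\in\mathcal{T},j\in[n]\}$. Suppose that the basis defining $p^t$ is unique for each $t\in\mathcal{T}$. If a facet of $P_D^0$ is standard, then it is a facet of $P_D$ that cuts off $\bar x$.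
   Context: A cobasis of a basic solution $p^t$ of $P^t$ is a set of $n$ linearly independent inequalities from the system defining $P^t$ that are tight at $p^t$; the basis cone $C^t$ is the intersection of these $n$ half-spaces. Nonbasic space: fix a cobasis $\{a_i^\top x\ge b_i: i\in N\}$ ($|N|=n$) of $\bar x$ in $P$; write $\tilde x=(a_i^\top x-b_i)_{i\in N}$ for points and $\tilde r=(a_i^\top r)_{i\in N}$ for rays, so $\bar x$ maps to the origin. PRLP$^0$ is the system in $\tilde\alpha\in\mathbb{R}^n$: $\tilde\alpha^\top\tilde p^t\ge 1$ for all $t\in\mathcal{T}$, $\tilde\alpha^\top\tilde r^{tj}\ge 0$ for all $t,j$; each feasible $\tilde\alpha$ gives the inequality $\tilde\alpha^\top\tilde x\ge 1$, violated by $\bar x$. A basic feasible solution $\tilde\alpha$ of PRLP$^0$ is one for which $n$ constraints are tight with linearly independent coefficient vectors; the corresponding points and rays are its nonbasic points and nonbasic rays. A facet of $P_D^0$ that cuts off $\bar x$ corresponds to such basic feasible solutions. For a basic feasible solution $\tilde\alpha$, a nonbasic ray $r^{tj}$ is a stray ray if there is no $t'\in\mathcal{T}$ such that $r^{tj}$ is an extreme ray of $C^{t'}$ and $\tilde\alpha^\top\tilde p^{t'}=1$. A facet of $P_D^0$ is standard if there is a corresponding basic feasible solution of PRLP$^0$ with no stray rays. *)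

theory Defs
  imports "HOL-Analysis.Analysis"
begin

definition ineq_poly :: "'k set \<Rightarrow> ('k \<Rightarrow> real^'n) \<Rightarrow> ('k \<Rightarrow> real) \<Rightarrow> (real^'n) set" where
  "ineq_poly S rw rhs = {x. \<forall>k\<in>S. rw k \<bullet> x \<ge> rhs k}"

definition is_cobasis :: "'k set \<Rightarrow> ('k \<Rightarrow> real^'n) \<Rightarrow> ('k \<Rightarrow> real) \<Rightarrow> real^'n \<Rightarrow> 'k set \<Rightarrow> bool" where
  "is_cobasis S rw rhs x N \<longleftrightarrow>
     N \<subseteq> S \<and> card N = CARD('n) \<and> inj_on rw N \<and> independent (rw ` N) \<and>
     (\<forall>k\<in>N. rw k \<bullet> x = rhs k)"

definition basic_optimal :: "'k set \<Rightarrow> ('k \<Rightarrow> real^'n) \<Rightarrow> ('k \<Rightarrow> real) \<Rightarrow> real^'n \<Rightarrow> real^'n \<Rightarrow> bool" where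
  "basic_optimal S rw rhs c x \<longleftrightarrow>
     x \<in> ineq_poly S rw rhs \<and> (\<exists>N. is_cobasis S rw rhs x N) \<and>
     (\<forall>y\<in>ineq_poly S rw rhs. c \<bullet> x \<le> c \<bullet> y)"

definition basis_cone :: "('k \<Rightarrow> real^'n) \<Rightarrow> ('k \<Rightarrow> real) \<Rightarrow> 'k set \<Rightarrow> (real^'n) set" where
  "basis_cone rw rhs N = ineq_poly N rw rhs"

definition extreme_ray_of :: "real^'n \<Rightarrow> (real^'n) set \<Rightarrow> real^'n \<Rightarrow> bool" where
  "extreme_ray_of r C p \<longleftrightarrow> r \<noteq> 0 \<and> {p + s *\<^sub>R r | s. s \<ge> 0} face_of C"

definition pointed :: "(real^'n) set \<Rightarrow> bool" where
  "pointed P \<longleftrightarrow> \<not> (\<exists>x d. d \<noteq> 0 \<and> (\<forall>s::real. x + s *\<^sub>R d \<in> P))"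

text \<open>System defining P^t: the rows of A (Inl) followed by the rows of D^t (Inr).\<close>
definition term_row :: "('i \<Rightarrow> real^'n) \<Rightarrow> ('t \<Rightarrow> 'k \<Rightarrow> real^'n) \<Rightarrow> 't \<Rightarrow> 'i + 'k \<Rightarrow> real^'n" where
  "term_row a d t q = (case q of Inl i \<Rightarrow> a i | Inr k \<Rightarrow> d t k)"

definition term_rhs :: "('i \<Rightarrow> real) \<Rightarrow> ('t \<Rightarrow> 'k \<Rightarrow> real) \<Rightarrow> 't \<Rightarrow> 'i + 'k \<Rightarrow> real" where
  "term_rhs b d0 t q = (case q of Inl i \<Rightarrow> b i | Inr k \<Rightarrow> d0 t k)"

definition term_idx :: "'i set \<Rightarrow> ('t \<Rightarrow> 'k set) \<Rightarrow> 't \<Rightarrow> ('i + 'k) set" where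
  "term_idx I K t = Inl ` I \<union> Inr ` K t"

text \<open>Nonbasic space w.r.t. a cobasis {a (sigma j) : j}, sigma a bijection from the
  coordinate index type 'n onto the cobasis.\<close>
definition nb_pt :: "('i \<Rightarrow> real^'n) \<Rightarrow> ('i \<Rightarrow> real) \<Rightarrow> ('n \<Rightarrow> 'i) \<Rightarrow> real^'n \<Rightarrow> real^'n" where
  "nb_pt a b \<sigma> x = (\<chi> j. a (\<sigma> j) \<bullet> x - b (\<sigma> j))"

definition nb_ray :: "('i \<Rightarrow> real^'n) \<Rightarrow> ('n \<Rightarrow> 'i) \<Rightarrow> real^'n \<Rightarrow> real^'n" where
  "nb_ray a \<sigma> r = (\<chi> j. a (\<sigma> j) \<bullet> r)"

text \<open>PRLP^0: constraints indexed by Inl t (points) and Inr (t,j) (rays).\<close>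
definition prlp_coef :: "('i \<Rightarrow> real^'n) \<Rightarrow> ('i \<Rightarrow> real) \<Rightarrow> ('n \<Rightarrow> 'i) \<Rightarrow>
    ('t \<Rightarrow> real^'n) \<Rightarrow> ('t \<Rightarrow> 'n \<Rightarrow> real^'n) \<Rightarrow> 't + ('t \<times> 'n) \<Rightarrow> real^'n" where
  "prlp_coef a b \<sigma> p r q = (case q of Inl t \<Rightarrow> nb_pt a b \<sigma> (p t) | Inr (t, j) \<Rightarrow> nb_ray a \<sigma> (r t j))"

definition prlp_rhs :: "'t + ('t \<times> 'n) \<Rightarrow> real" where
  "prlp_rhs q = (case q of Inl t \<Rightarrow> 1 | Inr tj \<Rightarrow> 0)"

definition prlp_feasible :: "('i \<Rightarrow> real^'n) \<Rightarrow> ('i \<Rightarrow> real) \<Rightarrow> ('n \<Rightarrow> 'i) \<Rightarrow> 't set \<Rightarrow>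
    ('t \<Rightarrow> real^'n) \<Rightarrow> ('t \<Rightarrow> 'n \<Rightarrow> real^'n) \<Rightarrow> real^'n \<Rightarrow> bool" where
  "prlp_feasible a b \<sigma> T p r \<alpha> \<longleftrightarrow>
     (\<forall>t\<in>T. \<alpha> \<bullet> nb_pt a b \<sigma> (p t) \<ge> 1) \<and> (\<forall>t\<in>T. \<forall>j. \<alpha> \<bullet> nb_ray a \<sigma> (r t j) \<ge> 0)"

definition prlp_basic :: "('i \<Rightarrow> real^'n) \<Rightarrow> ('i \<Rightarrow> real) \<Rightarrow> ('n \<Rightarrow> 'i) \<Rightarrow> 't set \<Rightarrow>
    ('t \<Rightarrow> real^'n) \<Rightarrow> ('t \<Rightarrow> 'n \<Rightarrow> real^'n) \<Rightarrow> real^'n \<Rightarrow> ('t + ('t \<times> 'n)) set \<Rightarrow> bool" where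
  "prlp_basic a b \<sigma> T p r \<alpha> Q \<longleftrightarrow>
     prlp_feasible a b \<sigma> T p r \<alpha> \<and>
     Q \<subseteq> Inl ` T \<union> Inr ` (T \<times> UNIV) \<and> card Q = CARD('n) \<and>
     inj_on (prlp_coef a b \<sigma> p r) Q \<and> independent (prlp_coef a b \<sigma> p r ` Q) \<and>
     (\<forall>q\<in>Q. \<alpha> \<bullet> prlp_coef a b \<sigma> p r q = prlp_rhs q)"

definition stray_ray :: "('i \<Rightarrow> real^'n) \<Rightarrow> ('i \<Rightarrow> real) \<Rightarrow> ('n \<Rightarrow> 'i) \<Rightarrow> 't set \<Rightarrow>
    ('t \<Rightarrow> real^'n) \<Rightarrow> ('t \<Rightarrow> 'n \<Rightarrow> real^'n) \<Rightarrow> ('t \<Rightarrow> (real^'n) set) \<Rightarrow> real^'n \<Rightarrow> 't \<Rightarrow> 'n \<Rightarrow> bool" where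
  "stray_ray a b \<sigma> T p r C \<alpha> t j \<longleftrightarrow>
     \<not> (\<exists>t'\<in>T. extreme_ray_of (r t j) (C t') (p t') \<and> \<alpha> \<bullet> nb_pt a b \<sigma> (p t') = 1)"

definition standard_facet :: "('i \<Rightarrow> real^'n) \<Rightarrow> ('i \<Rightarrow> real) \<Rightarrow> ('n \<Rightarrow> 'i) \<Rightarrow> 't set \<Rightarrow>
    ('t \<Rightarrow> real^'n) \<Rightarrow> ('t \<Rightarrow> 'n \<Rightarrow> real^'n) \<Rightarrow> ('t \<Rightarrow> (real^'n) set) \<Rightarrow>
    (real^'n) set \<Rightarrow> (real^'n) set \<Rightarrow> bool" where
  "standard_facet a b \<sigma> T p r C PD0 F \<longleftrightarrow>
     (\<exists>\<alpha> Q. prlp_basic a b \<sigma> T p r \<alpha> Q \<and>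
            F = {x \<in> PD0. \<alpha> \<bullet> nb_pt a b \<sigma> x = 1} \<and>
            (\<forall>t j. Inr (t, j) \<in> Q \<longrightarrow> \<not> stray_ray a b \<sigma> T p r C \<alpha> t j))"

end

theory Submission
  imports Defs
begin


lemma orth_span_zero:
  fixes x :: "'a::euclidean_space"
  assumes "\<forall>v\<in>S. x \<bullet> v = 0" "span S = UNIV"
  shows "x = 0"
proof -
  have "orthogonal x x"
    by (rule orthogonal_to_span) (use assms in \<open>auto simp: orthogonal_def\<close>)
  then show ?thesis by (simp add: orthogonal_def)
qed

lemma dual_basis:
  fixes u :: "'k \<Rightarrow> real^'n"
  assumes card: "card N = CARD('n)" and inj: "inj_on u N" and ind: "independent (u ` N)"
  shows "\<exists>w. (\<forall>k\<in>N. \<forall>k'\<in>N. u k' \<bullet> w k = (if k' = k then 1 else 0)) \<and>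
             (\<forall>y. y = (\<Sum>k\<in>N. (u k \<bullet> y) *\<^sub>R w k)) \<and>
             (\<forall>z. z = (\<Sum>k\<in>N. (w k \<bullet> z) *\<^sub>R u k))"
proof -
  have finN: "finite N" using card by (metis card.infinite zero_less_card_finite less_irrefl)
  have cardu: "card (u ` N) = card N" using inj by (simp add: card_image)
  have "dim (u ` N) = DIM(real^'n)"
    using dim_eq_card_independent[OF ind] cardu card by simp
  hence spanU: "span (u ` N) = UNIV" using dim_eq_full by blast
  have "\<forall>k\<in>N. \<exists>v. u k \<bullet> v = 1 \<and> (\<forall>k'\<in>N. k' \<noteq> k \<longrightarrow> u k' \<bullet> v = 0)"
  proof
    fix k assume kN: "k \<in> N"
    have ind2: "independent (u ` (N - {k}))"
      using ind by (rule independent_mono) auto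
    have "card (u ` (N - {k})) = card N - 1"
      using inj kN finN by (simp add: card_image inj_on_diff)
    hence dimlt: "dim (u ` (N - {k})) < DIM(real^'n)"
      using dim_eq_card_independent[OF ind2] card kN finN
      by (metis DIM_cart DIM_real card_gt_0_iff diff_less empty_iff less_one mult.right_neutral)
    then obtain x where x0: "x \<noteq> 0" and xo: "\<And>y. y \<in> span (u ` (N - {k})) \<Longrightarrow> orthogonal x y"
      using orthogonal_to_subspace_exists[OF dimlt] by blast
    have xo2: "\<forall>k'\<in>N. k' \<noteq> k \<longrightarrow> u k' \<bullet> x = 0"
    proof (intro ballI impI)
      fix k' assume "k' \<in> N" "k' \<noteq> k"
      hence "u k' \<in> span (u ` (N - {k}))" by (intro span_base) auto
      thus "u k' \<bullet> x = 0" using xo by (metis orthogonal_def inner_commute)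
    qed
    have "u k \<bullet> x \<noteq> 0"
    proof
      assume h: "u k \<bullet> x = 0"
      have "\<forall>v\<in>u ` N. x \<bullet> v = 0" using xo2 h by (auto simp: inner_commute)
      hence "x = 0" using orth_span_zero spanU by blast
      thus False using x0 by simp
    qed
    thus "\<exists>v. u k \<bullet> v = 1 \<and> (\<forall>k'\<in>N. k' \<noteq> k \<longrightarrow> u k' \<bullet> v = 0)"
      using xo2 by (intro exI[of _ "x /\<^sub>R (u k \<bullet> x)"]) auto
  qed
  then obtain w where w: "\<forall>k\<in>N. u k \<bullet> w k = 1 \<and> (\<forall>k'\<in>N. k' \<noteq> k \<longrightarrow> u k' \<bullet> w k = 0)"
    by metis
  have dual: "\<forall>k\<in>N. \<forall>k'\<in>N. u k' \<bullet> w k = (if k' = k then 1 else 0)" using w by auto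
  have expy: "y = (\<Sum>k\<in>N. (u k \<bullet> y) *\<^sub>R w k)" for y
  proof -
    let ?y = "(\<Sum>k\<in>N. (u k \<bullet> y) *\<^sub>R w k)"
    have "u k' \<bullet> ?y = u k' \<bullet> y" if "k' \<in> N" for k'
    proof -
      have "u k' \<bullet> ?y = (\<Sum>k\<in>N. (u k \<bullet> y) * (u k' \<bullet> w k))"
        by (simp add: inner_sum_right)
      also have "\<dots> = (\<Sum>k\<in>N. if k = k' then u k \<bullet> y else 0)"
        using dual that by (intro sum.cong) auto
      also have "\<dots> = u k' \<bullet> y" using that finN by simp
      finally show ?thesis .
    qed
    hence "\<forall>v\<in>u ` N. (y - ?y) \<bullet> v = 0" by (auto simp: inner_diff_left inner_commute[of y] inner_commute[of ?y])
    hence "y - ?y = 0" using orth_span_zero spanU by blast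
    thus ?thesis by simp
  qed
  have expz: "z = (\<Sum>k\<in>N. (w k \<bullet> z) *\<^sub>R u k)" for z
  proof -
    let ?z = "(\<Sum>k\<in>N. (w k \<bullet> z) *\<^sub>R u k)"
    have "?z \<bullet> y = z \<bullet> y" for y
    proof -
      have "?z \<bullet> y = (\<Sum>k\<in>N. (w k \<bullet> z) * (u k \<bullet> y))"
        by (simp add: inner_sum_left)
      also have "\<dots> = z \<bullet> (\<Sum>k\<in>N. (u k \<bullet> y) *\<^sub>R w k)"
        by (simp add: inner_sum_right inner_commute mult.commute)
      also have "\<dots> = z \<bullet> y" using expy[of y] by simp
      finally show ?thesis .
    qed
    hence "(z - ?z) \<bullet> (z - ?z) = 0" by (simp add: inner_diff_left)
    thus ?thesis by simp
  qed
  show ?thesis using dual expy expz by blast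
qed



lemma sum_single_nz:
  assumes "finite N" "k \<in> N" "\<forall>k'\<in>N. k' \<noteq> k \<longrightarrow> f k' = (0::'a::comm_monoid_add)"
  shows "sum f N = f k"
proof -
  have "sum f N = f k + sum f (N - {k})" using assms by (simp add: sum.remove)
  also have "sum f (N - {k}) = 0" using assms by (intro sum.neutral) auto
  finally show ?thesis by simp
qed

lemma ray_face:
  fixes u :: "'k \<Rightarrow> real^'n"
  assumes finN: "finite N"
   and dual: "\<forall>k\<in>N. \<forall>k'\<in>N. u k' \<bullet> w k = (if k' = k then 1 else 0)"
   and expy: "\<forall>y. y = (\<Sum>k\<in>N. (u k \<bullet> y) *\<^sub>R w k)"
   and tight: "\<forall>k\<in>N. u k \<bullet> p = h k" and kN: "k \<in> N"
  shows "extreme_ray_of (w k) (ineq_poly N u h) p"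
proof -
  let ?C = "ineq_poly N u h"
  let ?R = "{p + s *\<^sub>R w k | s. s \<ge> 0}"
  have wk1: "u k \<bullet> w k = 1" using dual kN by auto
  hence w0: "w k \<noteq> 0" by auto
  have sub: "?R \<subseteq> ?C"
  proof
    fix x assume "x \<in> ?R"
    then obtain s where s: "s \<ge> 0" "x = p + s *\<^sub>R w k" by auto
    show "x \<in> ?C" unfolding ineq_poly_def
    proof (intro CollectI ballI)
      fix k' assume k': "k' \<in> N"
      have "u k' \<bullet> x = h k' + s * (if k' = k then 1 else 0)"
        using s tight dual k' kN by (simp add: inner_add_right)
      thus "u k' \<bullet> x \<ge> h k'" using s by simp
    qed
  qed
  have cvx: "convex ?R"
    unfolding convex_def
  proof (intro ballI allI impI)
    fix x y :: "real^'n" and a b :: real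
    assume xR: "x \<in> ?R" and yR: "y \<in> ?R" and ab0: "0 \<le> a" "0 \<le> b" "a + b = 1"
    hence ab: "0 \<le> a \<and> 0 \<le> b \<and> a + b = 1" by simp
    obtain s1 where s1: "s1 \<ge> 0" "x = p + s1 *\<^sub>R w k" using xR by auto
    obtain s2 where s2: "s2 \<ge> 0" "y = p + s2 *\<^sub>R w k" using yR by auto
    note s = s1 s2
    have "a *\<^sub>R x + b *\<^sub>R y = (a + b) *\<^sub>R p + (a * s1 + b * s2) *\<^sub>R w k"
      using s by (simp add: algebra_simps)
    also have "\<dots> = p + (a * s1 + b * s2) *\<^sub>R w k" using ab by simp
    finally show "a *\<^sub>R x + b *\<^sub>R y \<in> ?R" using s ab by auto
  qed
  have key: "z \<in> ?R" if zC: "z \<in> ?C" and zt: "\<forall>k'\<in>N. k' \<noteq> k \<longrightarrow> u k' \<bullet> z = h k'" for z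
  proof -
    have "z - p = (\<Sum>k'\<in>N. (u k' \<bullet> (z - p)) *\<^sub>R w k')" using expy by blast
    also have "\<dots> = (u k \<bullet> (z - p)) *\<^sub>R w k"
      using finN kN zt tight by (intro sum_single_nz) (auto simp: inner_diff_right)
    finally have "z = p + (u k \<bullet> (z - p)) *\<^sub>R w k" by (simp add: algebra_simps)
    moreover have "u k \<bullet> (z - p) \<ge> 0"
      using zC kN tight by (auto simp: ineq_poly_def inner_diff_right)
    ultimately show ?thesis by blast
  qed
  have "?R face_of ?C"
    unfolding face_of_def
  proof (intro conjI sub cvx ballI impI)
    fix a b x assume aC: "a \<in> ?C" and bC: "b \<in> ?C" and xR: "x \<in> ?R" and xs: "x \<in> open_segment a b"
    obtain s where s: "s \<ge> 0" "x = p + s *\<^sub>R w k" using xR by auto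
    obtain \<theta> where th: "0 < \<theta>" "\<theta> < 1" "x = (1 - \<theta>) *\<^sub>R a + \<theta> *\<^sub>R b"
      using xs by (auto simp: in_segment)
    have both: "u k' \<bullet> a = h k' \<and> u k' \<bullet> b = h k'" if k': "k' \<in> N" "k' \<noteq> k" for k'
    proof -
      have "u k' \<bullet> x = h k'" using s tight dual k' kN by (simp add: inner_add_right)
      hence eq: "(1 - \<theta>) * (u k' \<bullet> a) + \<theta> * (u k' \<bullet> b) = h k'"
        using th by (simp add: inner_add_right)
      have A: "u k' \<bullet> a \<ge> h k'" and B: "u k' \<bullet> b \<ge> h k'"
        using aC bC k' by (auto simp: ineq_poly_def)
      have "(1 - \<theta>) * (u k' \<bullet> a - h k') \<ge> 0" "\<theta> * (u k' \<bullet> b - h k') \<ge> 0"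
        using A B th by auto
      moreover have "(1 - \<theta>) * (u k' \<bullet> a - h k') + \<theta> * (u k' \<bullet> b - h k') = 0"
        using eq by (simp add: algebra_simps)
      ultimately have "(1 - \<theta>) * (u k' \<bullet> a - h k') = 0" "\<theta> * (u k' \<bullet> b - h k') = 0" by linarith+
      thus ?thesis using th by auto
    qed
    show "a \<in> ?R" using key[OF aC] both by blast
    show "b \<in> ?R" using key[OF bC] both by blast
  qed
  thus ?thesis unfolding extreme_ray_of_def using w0 by blast
qed



lemma nondegen:
  fixes u :: "'k \<Rightarrow> real^'n"
  assumes cob: "is_cobasis S u h p N" and uniq: "\<forall>N'. is_cobasis S u h p N' \<longrightarrow> N' = N"
   and pin: "p \<in> ineq_poly S u h" and q: "q \<in> S" "q \<notin> N" "u q \<noteq> 0"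
  shows "u q \<bullet> p > h q"
proof (rule ccontr)
  assume "\<not> u q \<bullet> p > h q"
  moreover have "u q \<bullet> p \<ge> h q" using pin q by (auto simp: ineq_poly_def)
  ultimately have qt: "u q \<bullet> p = h q" by simp
  have card: "card N = CARD('n)" and inj: "inj_on u N" and ind: "independent (u ` N)"
    and NS: "N \<subseteq> S" and tight: "\<forall>k\<in>N. u k \<bullet> p = h k"
    using cob by (auto simp: is_cobasis_def)
  have finN: "finite N" using card by (metis card.infinite zero_less_card_finite less_irrefl)
  obtain w where dual: "\<forall>k\<in>N. \<forall>k'\<in>N. u k' \<bullet> w k = (if k' = k then 1 else 0)"
    and expz: "\<forall>z. z = (\<Sum>k\<in>N. (w k \<bullet> z) *\<^sub>R u k)"
    using dual_basis[OF card inj ind] by blast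
  have "\<exists>k0\<in>N. w k0 \<bullet> u q \<noteq> 0"
  proof (rule ccontr)
    assume "\<not> ?thesis"
    hence "(\<Sum>k\<in>N. (w k \<bullet> u q) *\<^sub>R u k) = 0" by simp
    moreover have "u q = (\<Sum>k\<in>N. (w k \<bullet> u q) *\<^sub>R u k)" using expz by blast
    ultimately show False using q(3) by simp
  qed
  then obtain k0 where k0: "k0 \<in> N" "w k0 \<bullet> u q \<noteq> 0" by blast
  define N' where "N' = insert q (N - {k0})"
  have cardN': "card N' = card N"
    using finN k0 q unfolding N'_def
    by (simp add: card.insert_remove) (metis Suc_pred card_gt_0_iff empty_iff finN k0(1))
  have uq_notin: "u q \<notin> u ` (N - {k0})"
  proof
    assume "u q \<in> u ` (N - {k0})"
    then obtain k1 where k1: "k1 \<in> N" "k1 \<noteq> k0" "u q = u k1" by auto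
    hence "w k0 \<bullet> u q = 0" using dual k0 by (simp add: inner_commute)
    thus False using k0 by simp
  qed
  have injN': "inj_on u N'"
    unfolding N'_def using uq_notin inj by (auto intro: inj_on_subset)
  have spanB: "span (u ` N') = UNIV"
  proof -
    have sub1: "u k \<in> span (u ` N')" if "k \<in> N" "k \<noteq> k0" for k
      using that by (intro span_base) (auto simp: N'_def)
    have "u q = (\<Sum>k\<in>N. (w k \<bullet> u q) *\<^sub>R u k)" using expz by blast
    also have "\<dots> = (w k0 \<bullet> u q) *\<^sub>R u k0 + (\<Sum>k\<in>N - {k0}. (w k \<bullet> u q) *\<^sub>R u k)"
      using finN k0 by (simp add: sum.remove)
    finally have "u q - (\<Sum>k\<in>N - {k0}. (w k \<bullet> u q) *\<^sub>R u k) = (w k0 \<bullet> u q) *\<^sub>R u k0"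
      by (metis add_diff_cancel_right')
    moreover have "(1 / (w k0 \<bullet> u q)) *\<^sub>R ((w k0 \<bullet> u q) *\<^sub>R u k0) = u k0"
      using k0(2) by (simp only: scaleR_scaleR) simp
    ultimately have ukeq: "u k0 = (1 / (w k0 \<bullet> u q)) *\<^sub>R (u q - (\<Sum>k\<in>N - {k0}. (w k \<bullet> u q) *\<^sub>R u k))"
      by (simp only:)
    have "u q \<in> span (u ` N')" by (intro span_base) (auto simp: N'_def)
    moreover have "(\<Sum>k\<in>N - {k0}. (w k \<bullet> u q) *\<^sub>R u k) \<in> span (u ` N')"
      using sub1 by (intro span_sum span_scale) auto
    ultimately have "(1 / (w k0 \<bullet> u q)) *\<^sub>R (u q - (\<Sum>k\<in>N - {k0}. (w k \<bullet> u q) *\<^sub>R u k)) \<in> span (u ` N')"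
      by (intro span_scale span_diff)
    hence "u k0 \<in> span (u ` N')" by (subst ukeq)
    hence all: "u k \<in> span (u ` N')" if "k \<in> N" for k using sub1 that by blast
    have "z \<in> span (u ` N')" for z
    proof -
      have "(\<Sum>k\<in>N. (w k \<bullet> z) *\<^sub>R u k) \<in> span (u ` N')"
        using all by (intro span_sum span_scale) auto
      moreover have "z = (\<Sum>k\<in>N. (w k \<bullet> z) *\<^sub>R u k)" using expz by blast
      ultimately show ?thesis by simp
    qed
    thus ?thesis by auto
  qed
  have finN': "finite N'" using finN by (simp add: N'_def)
  have indN': "independent (u ` N')"
  proof (rule card_le_dim_spanning[of _ UNIV])
    show "u ` N' \<subseteq> UNIV" by simp
    show "UNIV \<subseteq> span (u ` N')" using spanB by simp
    show "finite (u ` N')" using finN' by simp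
    show "card (u ` N') \<le> dim (UNIV :: (real^'n) set)"
      using card_image_le[OF finN', of u] cardN' card by simp
  qed
  have "is_cobasis S u h p N'"
    unfolding is_cobasis_def
    using NS q cardN' card injN' indN' tight qt by (auto simp: N'_def)
  hence "N' = N" using uniq by blast
  thus False using q by (auto simp: N'_def)
qed



lemma small_step:
  fixes u :: "'k \<Rightarrow> real^'n"
  assumes finS: "finite S" and pin: "p \<in> ineq_poly S u h"
   and nd: "\<forall>q\<in>S. q \<notin> N \<longrightarrow> u q \<noteq> 0 \<longrightarrow> u q \<bullet> p > h q"
   and dir: "\<forall>k\<in>N. u k \<bullet> \<rho> \<ge> 0"
  shows "\<exists>s>0. p + s *\<^sub>R \<rho> \<in> ineq_poly S u h"
proof -
  have ev: "\<forall>q\<in>S. eventually (\<lambda>s. u q \<bullet> (p + s *\<^sub>R \<rho>) \<ge> h q) (at_right (0::real))"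
  proof
    fix q assume qS: "q \<in> S"
    have hp: "u q \<bullet> p \<ge> h q" using pin qS by (auto simp: ineq_poly_def)
    show "eventually (\<lambda>s. u q \<bullet> (p + s *\<^sub>R \<rho>) \<ge> h q) (at_right (0::real))"
    proof (cases "q \<in> N")
      case True
      show ?thesis using eventually_at_right_less[of "0::real"]
      proof (rule eventually_mono)
        fix s :: real assume "0 < s"
        thus "u q \<bullet> (p + s *\<^sub>R \<rho>) \<ge> h q" using hp dir True
          by (simp add: inner_add_right) (meson add_increasing2 mult_nonneg_nonneg less_imp_le)
      qed
    next
      case False
      show ?thesis
      proof (cases "u q = 0")
        case True
        thus ?thesis using hp by simp
      next
        case nz: False
        have gt: "u q \<bullet> p > h q" using nd qS False nz by blast
        have "((\<lambda>s. u q \<bullet> (p + s *\<^sub>R \<rho>)) \<longlongrightarrow> u q \<bullet> (p + 0 *\<^sub>R \<rho>)) (at_right (0::real))"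
          by (intro tendsto_intros)
        hence "((\<lambda>s. u q \<bullet> (p + s *\<^sub>R \<rho>)) \<longlongrightarrow> u q \<bullet> p) (at_right (0::real))" by simp
        from order_tendstoD(1)[OF this gt] show ?thesis
          by (rule eventually_mono) simp
      qed
    qed
  qed
  have "eventually (\<lambda>s. s > 0 \<and> (\<forall>q\<in>S. u q \<bullet> (p + s *\<^sub>R \<rho>) \<ge> h q)) (at_right (0::real))"
    using eventually_at_right_less[of "0::real"] eventually_ball_finite[OF finS ev]
    by (rule eventually_conj)
  then obtain s where "s > 0" "\<forall>q\<in>S. u q \<bullet> (p + s *\<^sub>R \<rho>) \<ge> h q"
    using eventually_happens' trivial_limit_at_right_real by (metis (no_types, lifting))
  thus ?thesis unfolding ineq_poly_def by blast
qed



theorem theorem2: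
  fixes I :: "'i set" and a :: "'i \<Rightarrow> real^'n" and b :: "'i \<Rightarrow> real"
    and c :: "real^'n" and xbar :: "real^'n" and \<sigma> :: "'n \<Rightarrow> 'i"
    and T :: "'t set" and K :: "'t \<Rightarrow> 'k set"
    and d :: "'t \<Rightarrow> 'k \<Rightarrow> real^'n" and d0 :: "'t \<Rightarrow> 'k \<Rightarrow> real"
    and p :: "'t \<Rightarrow> real^'n" and N :: "'t \<Rightarrow> ('i + 'k) set"
    and r :: "'t \<Rightarrow> 'n \<Rightarrow> real^'n" and F :: "(real^'n) set"
  defines "P \<equiv> ineq_poly I a b"
    and "PD \<equiv> closure (convex hull
                 (\<Union>t\<in>T. ineq_poly (term_idx I K t) (term_row a d t) (term_rhs b d0 t)))"
    and "C \<equiv> (\<lambda>t. basis_cone (term_row a d t) (term_rhs b d0 t) (N t))"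
    and "PD0 \<equiv> {u + v | u v. u \<in> convex hull (p ` T) \<and>
                   v \<in> convex_cone hull {r t j | t j. t \<in> T}}"
  assumes finI: "finite I"
    and rat: "\<forall>i\<in>I. b i \<in> \<rat> \<and> (\<forall>j. a i $ j \<in> \<rat>)"
    and fulldim: "aff_dim P = int CARD('n)"
    and pointed: "pointed P"
    and xbar_opt: "basic_optimal I a b c xbar"
    and sigma: "inj \<sigma>" "is_cobasis I a b xbar (range \<sigma>)"
    and finT: "finite T"
    and finK: "\<forall>t\<in>T. finite (K t)"
    and xbar_out: "xbar \<notin> PD"
    and p_opt: "\<forall>t\<in>T. basic_optimal (term_idx I K t) (term_row a d t) (term_rhs b d0 t) c (p t)"
    and N_cob: "\<forall>t\<in>T. is_cobasis (term_idx I K t) (term_row a d t) (term_rhs b d0 t) (p t) (N t)"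
    and N_unique: "\<forall>t\<in>T. \<forall>N'. is_cobasis (term_idx I K t) (term_row a d t) (term_rhs b d0 t) (p t) N'
                      \<longrightarrow> N' = N t"
    and rays_ext: "\<forall>t\<in>T. \<forall>j. extreme_ray_of (r t j) (C t) (p t)"
    and rays_all: "\<forall>t\<in>T. \<forall>\<rho>. extreme_ray_of \<rho> (C t) (p t) \<longrightarrow>
                      (\<exists>j. \<exists>\<mu>>0. \<rho> = \<mu> *\<^sub>R r t j)"
    and rays_distinct: "\<forall>t\<in>T. \<forall>j j'. j \<noteq> j' \<longrightarrow> \<not> (\<exists>\<mu>>0. r t j' = \<mu> *\<^sub>R r t j)"
    and facet: "F facet_of PD0"
    and standard: "standard_facet a b \<sigma> T p r C PD0 F"
  shows "\<exists>g \<beta>. PD0 \<subseteq> {x. g \<bullet> x \<ge> \<beta>} \<and> F = PD0 \<inter> {x. g \<bullet> x = \<beta>} \<and>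
               PD \<subseteq> {x. g \<bullet> x \<ge> \<beta>} \<and> (PD \<inter> {x. g \<bullet> x = \<beta>}) facet_of PD \<and>
               g \<bullet> xbar < \<beta>"
proof -
  obtain \<alpha> Q where bas: "prlp_basic a b \<sigma> T p r \<alpha> Q"
    and Fdef: "F = {x \<in> PD0. \<alpha> \<bullet> nb_pt a b \<sigma> x = 1}"
    and nostray: "\<forall>t j. Inr (t, j) \<in> Q \<longrightarrow> \<not> stray_ray a b \<sigma> T p r C \<alpha> t j"
    using standard unfolding standard_facet_def by blast
  let ?coef = "prlp_coef a b \<sigma> p r"
  have feasP: "\<forall>t\<in>T. \<alpha> \<bullet> nb_pt a b \<sigma> (p t) \<ge> 1"
    and feasR: "\<forall>t\<in>T. \<forall>j. \<alpha> \<bullet> nb_ray a \<sigma> (r t j) \<ge> 0"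
    and Qsub: "Q \<subseteq> Inl ` T \<union> Inr ` (T \<times> UNIV)" and cardQ: "card Q = CARD('n)"
    and injQ: "inj_on ?coef Q" and indQ: "independent (?coef ` Q)"
    and tightQ: "\<forall>q\<in>Q. \<alpha> \<bullet> ?coef q = prlp_rhs q"
    using bas unfolding prlp_basic_def prlp_feasible_def by auto
  define L where "L = nb_ray a \<sigma>"
  define bv :: "real^'n" where "bv = (\<chi> j. b (\<sigma> j))"
  define g where "g = (\<Sum>j\<in>UNIV. (\<alpha> $ j) *\<^sub>R a (\<sigma> j))"
  define \<beta> where "\<beta> = 1 + (\<Sum>j\<in>UNIV. (\<alpha> $ j) * b (\<sigma> j))"
  have nbpt: "nb_pt a b \<sigma> x = L x - bv" for x
    by (simp add: nb_pt_def L_def nb_ray_def bv_def vec_eq_iff)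
  have Llin: "linear L"
    by (rule linearI) (simp_all add: L_def nb_ray_def vec_eq_iff inner_add_right)
  have gL: "\<alpha> \<bullet> L y = g \<bullet> y" for y
  proof -
    have "\<alpha> \<bullet> L y = (\<Sum>j\<in>UNIV. \<alpha> $ j * (a (\<sigma> j) \<bullet> y))"
      by (simp only: inner_vec_def[of \<alpha> "L y"]) (simp add: L_def nb_ray_def)
    also have "\<dots> = g \<bullet> y" by (simp add: g_def inner_sum_left)
    finally show ?thesis .
  qed
  have abv: "\<alpha> \<bullet> bv = \<beta> - 1"
    by (simp add: bv_def \<beta>_def inner_vec_def)
  have Hid: "\<alpha> \<bullet> nb_pt a b \<sigma> x = g \<bullet> x - \<beta> + 1" for x
    using gL abv by (simp add: nbpt inner_diff_right)
  have Hid2: "\<alpha> \<bullet> nb_ray a \<sigma> y = g \<bullet> y" for y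
    using gL by (simp add: L_def)
  have Qfin: "finite Q" using cardQ by (metis card.infinite zero_less_card_finite less_irrefl)
  have Qne: "Q \<noteq> {}" using cardQ by auto
  have TQ: "t \<in> T" if "Inl t \<in> Q" for t using Qsub that by auto
  have TQ2: "t \<in> T" if "Inr (t, j) \<in> Q" for t j using Qsub that by auto
  obtain t0 where t0: "t0 \<in> T"
  proof -
    obtain q where "q \<in> Q" using Qne by blast
    thus ?thesis using that TQ TQ2 by (cases q) auto
  qed
  have feasPg: "\<forall>t\<in>T. g \<bullet> p t \<ge> \<beta>" using feasP Hid by auto
  have feasRg: "\<forall>t\<in>T. \<forall>j. g \<bullet> r t j \<ge> 0" using feasR Hid2 by auto
  have alpha0: "\<alpha> \<noteq> 0" using feasP t0 by force
  have cs: "card (range \<sigma>) = CARD('n)" "inj_on a (range \<sigma>)" "independent (a ` range \<sigma>)"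
    and xt: "\<forall>k\<in>range \<sigma>. a k \<bullet> xbar = b k"
    using sigma(2) by (auto simp: is_cobasis_def)
  obtain ws where dws: "\<forall>k\<in>range \<sigma>. \<forall>k'\<in>range \<sigma>. a k' \<bullet> ws k = (if k' = k then 1 else 0)"
    and ews: "\<forall>y. y = (\<Sum>k\<in>range \<sigma>. (a k \<bullet> y) *\<^sub>R ws k)"
    using dual_basis[OF cs] by blast
  have g0: "g \<noteq> 0"
  proof
    assume "g = 0"
    have "\<alpha> $ i = 0" for i
    proof -
      have "ws (\<sigma> i) \<bullet> g = (\<Sum>j\<in>UNIV. \<alpha> $ j * (a (\<sigma> j) \<bullet> ws (\<sigma> i)))"
        by (simp add: g_def inner_sum_right inner_commute)
      also have "\<dots> = (\<Sum>j\<in>UNIV. if j = i then \<alpha> $ j else 0)"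
        using dws sigma(1) by (intro sum.cong) (auto simp: inj_eq)
      also have "\<dots> = \<alpha> $ i" by simp
      finally show ?thesis using \<open>g = 0\<close> by simp
    qed
    thus False using alpha0 by (simp add: vec_eq_iff)
  qed
  have L0: "y = 0" if "L y = 0" for y
  proof -
    have "y = (\<Sum>k\<in>range \<sigma>. (a k \<bullet> y) *\<^sub>R ws k)" using ews by blast
    also have "\<dots> = 0"
    proof (intro sum.neutral ballI)
      fix k assume "k \<in> range \<sigma>"
      then obtain j where "k = \<sigma> j" by blast
      hence "a k \<bullet> y = L y $ j" by (simp add: L_def nb_ray_def)
      thus "(a k \<bullet> y) *\<^sub>R ws k = 0" using that by simp
    qed
    finally show ?thesis .
  qed
  have Linj: "y1 = y2" if "L y1 = L y2" for y1 y2
    using L0[of "y1 - y2"] that linear_diff[OF Llin] by simp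
  have Cdef: "C t = ineq_poly (N t) (term_row a d t) (term_rhs b d0 t)" for t
    by (simp add: C_def basis_cone_def)
  have PtPD: "ineq_poly (term_idx I K t) (term_row a d t) (term_rhs b d0 t) \<subseteq> PD" if "t \<in> T" for t
    unfolding PD_def using that by (intro subset_trans[OF _ closure_subset] subset_trans[OF _ hull_subset]) auto
  have cobt: "card (N t) = CARD('n)" "inj_on (term_row a d t) (N t)" "independent (term_row a d t ` N t)"
     "N t \<subseteq> term_idx I K t" "\<forall>k\<in>N t. term_row a d t k \<bullet> p t = term_rhs b d0 t k"
    if "t \<in> T" for t using N_cob that by (auto simp: is_cobasis_def)
  have pin: "p t \<in> ineq_poly (term_idx I K t) (term_row a d t) (term_rhs b d0 t)" if "t \<in> T" for t
    using p_opt that by (auto simp: basic_optimal_def)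
  have finN: "finite (N t)" if "t \<in> T" for t
    using cobt(1)[OF that] by (metis card.infinite zero_less_card_finite less_irrefl)
  have fin_idx: "finite (term_idx I K t)" if "t \<in> T" for t
    using finI finK that by (simp add: term_idx_def)
  have nd: "\<forall>q\<in>term_idx I K t. q \<notin> N t \<longrightarrow> term_row a d t q \<noteq> 0 \<longrightarrow>
       term_row a d t q \<bullet> p t > term_rhs b d0 t q" if "t \<in> T" for t
    using nondegen[OF N_cob[rule_format, OF that] bspec[OF N_unique that] pin[OF that]] by blast
  have step: "\<exists>s>0. p t + s *\<^sub>R \<rho> \<in> PD" if tT: "t \<in> T" and rC: "p t + \<rho> \<in> C t" for t \<rho>
  proof -
    have "\<forall>k\<in>N t. term_row a d t k \<bullet> \<rho> \<ge> 0"
      using rC cobt(5)[OF tT] by (auto simp: Cdef ineq_poly_def inner_add_right)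
    then obtain s where "s > 0" "p t + s *\<^sub>R \<rho> \<in> ineq_poly (term_idx I K t) (term_row a d t) (term_rhs b d0 t)"
      using small_step[OF fin_idx[OF tT] pin[OF tT] nd[OF tT]] by blast
    thus ?thesis using PtPD[OF tT] by blast
  qed
  have duals: "\<exists>w. (\<forall>k\<in>N t. \<forall>k'\<in>N t. term_row a d t k' \<bullet> w k = (if k' = k then 1 else 0)) \<and>
             (\<forall>y. y = (\<Sum>k\<in>N t. (term_row a d t k \<bullet> y) *\<^sub>R w k)) \<and>
             (\<forall>z. z = (\<Sum>k\<in>N t. (w k \<bullet> z) *\<^sub>R term_row a d t k))" if "t \<in> T" for t
    using dual_basis[OF cobt(1-3)[OF that]] by blast
  have cone_valid: "g \<bullet> x \<ge> \<beta>" if tT: "t \<in> T" and xC: "x \<in> C t" for t x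
  proof -
    obtain w where dual: "\<forall>k\<in>N t. \<forall>k'\<in>N t. term_row a d t k' \<bullet> w k = (if k' = k then 1 else 0)"
      and expy: "\<forall>y. y = (\<Sum>k\<in>N t. (term_row a d t k \<bullet> y) *\<^sub>R w k)"
      using duals[OF tT] by blast
    have gw: "g \<bullet> w k \<ge> 0" if "k \<in> N t" for k
    proof -
      have "extreme_ray_of (w k) (C t) (p t)"
        unfolding Cdef using ray_face[OF finN[OF \<open>t \<in> T\<close>] dual expy cobt(5)[OF \<open>t \<in> T\<close>] that] .
      then obtain j \<mu> where "\<mu> > 0" "w k = \<mu> *\<^sub>R r t j" using rays_all \<open>t \<in> T\<close> by blast
      thus ?thesis using feasRg \<open>t \<in> T\<close> by simp
    qed
    have "g \<bullet> (x - p t) = (\<Sum>k\<in>N t. (term_row a d t k \<bullet> (x - p t)) * (g \<bullet> w k))"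
      by (subst expy[rule_format, of "x - p t"]) (simp add: inner_sum_right)
    also have "\<dots> \<ge> 0"
    proof (intro sum_nonneg mult_nonneg_nonneg gw)
      fix k assume "k \<in> N t"
      thus "term_row a d t k \<bullet> (x - p t) \<ge> 0"
        using xC cobt(5)[OF tT] by (auto simp: Cdef ineq_poly_def inner_diff_right)
    qed
    finally show ?thesis using feasPg tT by (simp add: inner_diff_right) (meson order_trans)
  qed
  have PD_valid: "PD \<subseteq> {x. g \<bullet> x \<ge> \<beta>}"
  proof -
    have "(\<Union>t\<in>T. ineq_poly (term_idx I K t) (term_row a d t) (term_rhs b d0 t)) \<subseteq> {x. g \<bullet> x \<ge> \<beta>}"
    proof (intro UN_least subsetI)
      fix t x assume t: "t \<in> T" and x: "x \<in> ineq_poly (term_idx I K t) (term_row a d t) (term_rhs b d0 t)"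
      have "x \<in> C t" using x cobt(4)[OF t] by (auto simp: Cdef ineq_poly_def)
      thus "x \<in> {x. g \<bullet> x \<ge> \<beta>}" using cone_valid[OF t] by simp
    qed
    hence "convex hull (\<Union>t\<in>T. ineq_poly (term_idx I K t) (term_row a d t) (term_rhs b d0 t)) \<subseteq> {x. g \<bullet> x \<ge> \<beta>}"
      by (intro hull_minimal convex_halfspace_ge)
    thus ?thesis unfolding PD_def by (intro closure_minimal closed_halfspace_ge)
  qed
  have PD0_valid: "PD0 \<subseteq> {x. g \<bullet> x \<ge> \<beta>}"
  proof
    fix x assume "x \<in> PD0"
    then obtain u v where x: "x = u + v" and u: "u \<in> convex hull (p ` T)"
      and v: "v \<in> convex_cone hull {r t j | t j. t \<in> T}" unfolding PD0_def by blast
    have "convex hull (p ` T) \<subseteq> {x. g \<bullet> x \<ge> \<beta>}"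
      using feasPg by (intro hull_minimal convex_halfspace_ge) auto
    hence gu: "g \<bullet> u \<ge> \<beta>" using u by auto
    have "convex_cone hull {r t j | t j. t \<in> T} \<subseteq> {x. g \<bullet> x \<ge> 0}"
      using feasRg by (intro hull_minimal convex_cone_halfspace_ge) auto
    hence gv: "g \<bullet> v \<ge> 0" using v by auto
    show "x \<in> {x. g \<bullet> x \<ge> \<beta>}" using gu gv x by (simp add: inner_add_right)
  qed
  have Feq: "F = PD0 \<inter> {x. g \<bullet> x = \<beta>}" using Fdef Hid by auto
  have xbar_lt: "g \<bullet> xbar < \<beta>"
  proof -
    have "nb_pt a b \<sigma> xbar = 0" using xt by (simp add: nb_pt_def vec_eq_iff)
    thus ?thesis using Hid[of xbar] by simp
  qed
  have facetPD: "(PD \<inter> {x. g \<bullet> x = \<beta>}) facet_of PD"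
  proof -
    define S where "S = PD \<inter> {x. g \<bullet> x = \<beta>}"
    have cvxPD: "convex PD" unfolding PD_def by simp
    have face: "S face_of PD" unfolding S_def
      using face_of_Int_supporting_hyperplane_ge[OF cvxPD] PD_valid by auto
    have pS: "p t \<in> S" if "t \<in> T" "g \<bullet> p t = \<beta>" for t
      using PtPD[OF that(1)] pin[OF that(1)] that(2) by (auto simp: S_def)
    have rayS: "\<exists>t'\<in>T. p t' \<in> S \<and> (\<exists>s>0. p t' + s *\<^sub>R r t j \<in> S)"
      if q: "Inr (t, j) \<in> Q" for t j
    proof -
      have t: "t \<in> T" using TQ2 q by blast
      have "\<alpha> \<bullet> ?coef (Inr (t, j)) = 0" using tightQ q by (simp add: prlp_rhs_def)
      hence gr: "g \<bullet> r t j = 0" using Hid2 by (simp add: prlp_coef_def)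
      obtain t' where t': "t' \<in> T" "extreme_ray_of (r t j) (C t') (p t')" "\<alpha> \<bullet> nb_pt a b \<sigma> (p t') = 1"
        using nostray q unfolding stray_ray_def by blast
      have gp: "g \<bullet> p t' = \<beta>" using t'(3) Hid by simp
      have "{p t' + s *\<^sub>R r t j |s. 0 \<le> s} \<subseteq> C t'"
        using t'(2) unfolding extreme_ray_of_def face_of_def by blast
      moreover have "p t' + 1 *\<^sub>R r t j \<in> {p t' + s *\<^sub>R r t j |s. 0 \<le> s}" by (rule CollectI, rule exI[of _ 1]) simp
      ultimately have "p t' + 1 *\<^sub>R r t j \<in> C t'" by blast
      then obtain s where s: "s > 0" "p t' + s *\<^sub>R r t j \<in> PD" using step[OF t'(1)] by auto
      have "p t' + s *\<^sub>R r t j \<in> S" using s gp gr by (simp add: S_def inner_add_right)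
      thus ?thesis using pS[OF t'(1) gp] s t'(1) by blast
    qed
    obtain z0 where z0: "z0 \<in> S"
    proof -
      obtain q where q: "q \<in> Q" using Qne by blast
      show ?thesis
      proof (cases q)
        case (Inl t)
        hence "\<alpha> \<bullet> nb_pt a b \<sigma> (p t) = 1" using bspec[OF tightQ, of "Inl t"] q by (simp add: prlp_rhs_def prlp_coef_def)
        hence "g \<bullet> p t = \<beta>" using Hid by simp
        thus ?thesis using pS TQ q Inl that by blast
      next
        case (Inr tj)
        then obtain t j where "q = Inr (t, j)" by (cases tj) auto
        thus ?thesis using rayS q that by blast
      qed
    qed
    have SneqPD: "S \<noteq> PD"
    proof
      assume SPD: "S = PD"
      obtain w where dual: "\<forall>k\<in>N t0. \<forall>k'\<in>N t0. term_row a d t0 k' \<bullet> w k = (if k' = k then 1 else 0)"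
        and expy: "\<forall>y. y = (\<Sum>k\<in>N t0. (term_row a d t0 k \<bullet> y) *\<^sub>R w k)"
        using duals[OF t0] by blast
      have inH: "g \<bullet> x = \<beta>" if "x \<in> PD" for x using that SPD by (auto simp: S_def)
      have gp: "g \<bullet> p t0 = \<beta>" using inH PtPD[OF t0] pin[OF t0] by blast
      have gw: "g \<bullet> w k = 0" if k: "k \<in> N t0" for k
      proof -
        have "p t0 + w k \<in> C t0"
          unfolding Cdef ineq_poly_def using dual k cobt(5)[OF t0] by (auto simp: inner_add_right)
        then obtain s where s: "s > 0" "p t0 + s *\<^sub>R w k \<in> PD" using step[OF t0] by blast
        hence "g \<bullet> (p t0 + s *\<^sub>R w k) = \<beta>" using inH by blast
        hence "s * (g \<bullet> w k) = 0" using gp by (simp add: inner_add_right)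
        thus ?thesis using s by simp
      qed
      have "g \<bullet> g = (\<Sum>k\<in>N t0. (term_row a d t0 k \<bullet> g) * (g \<bullet> w k))"
        by (subst (2) expy[rule_format, of g]) (simp add: inner_sum_right)
      also have "\<dots> = 0" using gw by simp
      finally show False using g0 by simp
    qed
    define D where "D = (\<lambda>x. x - z0) ` S"
    have affS: "aff_dim S = int (dim D)"
      unfolding D_def by (rule aff_dim_eq_dim_subtract) (rule hull_inc[OF z0])
    define e where "e q = (case q of Inl t \<Rightarrow> p t - z0 | Inr tj \<Rightarrow> r (fst tj) (snd tj))" for q
    have Le: "L (e q) = ?coef q + prlp_rhs q *\<^sub>R (bv - L z0)" if "q \<in> Q" for q
    proof (cases q)
      case (Inl t)
      thus ?thesis by (simp add: e_def prlp_coef_def prlp_rhs_def nbpt linear_diff[OF Llin])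
    next
      case (Inr tj)
      thus ?thesis by (cases tj) (simp add: e_def prlp_coef_def prlp_rhs_def L_def)
    qed
    have espan: "e q \<in> span D" if q: "q \<in> Q" for q
    proof (cases q)
      case (Inl t)
      hence "\<alpha> \<bullet> nb_pt a b \<sigma> (p t) = 1" using bspec[OF tightQ, of "Inl t"] q by (simp add: prlp_rhs_def prlp_coef_def)
      hence "g \<bullet> p t = \<beta>" using Hid by simp
      hence "p t \<in> S" using pS TQ q Inl by blast
      hence "p t - z0 \<in> D" unfolding D_def by blast
      thus ?thesis using Inl by (simp add: e_def span_base)
    next
      case (Inr tj)
      then obtain t j where tj: "q = Inr (t, j)" by (cases tj) auto
      then obtain t' s where t': "p t' \<in> S" "s > 0" "p t' + s *\<^sub>R r t j \<in> S"
        using rayS q by blast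
      have d1: "(p t' + s *\<^sub>R r t j) - z0 \<in> span D" using t'(3) unfolding D_def by (intro span_base) blast
      have d2: "p t' - z0 \<in> span D" using t'(1) unfolding D_def by (intro span_base) blast
      have "(1 / s) *\<^sub>R (((p t' + s *\<^sub>R r t j) - z0) - (p t' - z0)) \<in> span D"
        by (intro span_scale) (rule span_diff[OF d1 d2])
      moreover have "(1 / s) *\<^sub>R (((p t' + s *\<^sub>R r t j) - z0) - (p t' - z0)) = r t j"
        using t'(2) by simp
      ultimately show ?thesis using tj by (simp add: e_def)
    qed
    have spanQ: "span (?coef ` Q) = UNIV"
    proof -
      have "dim (?coef ` Q) = DIM(real^'n)"
        using dim_eq_card_independent[OF indQ] card_image[OF injQ] cardQ by simp
      thus ?thesis using dim_eq_full by blast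
    qed
    have Wsub: "{y. g \<bullet> y = 0} \<subseteq> span D"
    proof
      fix y assume "y \<in> {y. g \<bullet> y = 0}"
      hence gy: "g \<bullet> y = 0" by simp
      have "L y \<in> span (?coef ` Q)" using spanQ by simp
      then obtain c where "L y = (\<Sum>v\<in>?coef ` Q. c v *\<^sub>R v)"
        using span_finite[of "?coef ` Q"] Qfin by auto
      also have "\<dots> = (\<Sum>q\<in>Q. c (?coef q) *\<^sub>R ?coef q)"
        using sum.reindex[OF injQ] by simp
      finally have Ly: "L y = (\<Sum>q\<in>Q. c (?coef q) *\<^sub>R ?coef q)" .
      define c' where "c' q = c (?coef q)" for q
      have Ly': "L y = (\<Sum>q\<in>Q. c' q *\<^sub>R ?coef q)" using Ly by (simp add: c'_def)
      have sr: "(\<Sum>q\<in>Q. c' q * prlp_rhs q) = 0"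
      proof -
        have "(\<Sum>q\<in>Q. c' q * prlp_rhs q) = (\<Sum>q\<in>Q. c' q * (\<alpha> \<bullet> ?coef q))"
          using tightQ by simp
        also have "\<dots> = \<alpha> \<bullet> L y" by (simp add: Ly' inner_sum_right)
        also have "\<dots> = 0" using gL gy by simp
        finally show ?thesis .
      qed
      have "L (\<Sum>q\<in>Q. c' q *\<^sub>R e q) = (\<Sum>q\<in>Q. c' q *\<^sub>R L (e q))"
        by (simp add: linear_sum[OF Llin] linear_scale[OF Llin])
      also have "\<dots> = (\<Sum>q\<in>Q. c' q *\<^sub>R ?coef q + (c' q * prlp_rhs q) *\<^sub>R (bv - L z0))"
        using Le by (intro sum.cong) (auto simp: scaleR_add_right)
      also have "\<dots> = L y + (\<Sum>q\<in>Q. c' q * prlp_rhs q) *\<^sub>R (bv - L z0)"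
        by (simp add: sum.distrib Ly' scaleR_sum_left)
      also have "\<dots> = L y" using sr by simp
      finally have "y = (\<Sum>q\<in>Q. c' q *\<^sub>R e q)" using Linj by metis
      moreover have "(\<Sum>q\<in>Q. c' q *\<^sub>R e q) \<in> span D"
        using espan by (intro span_sum span_scale) auto
      ultimately show "y \<in> span D" by simp
    qed
    have "dim {y. g \<bullet> y = 0} = CARD('n) - 1" using dim_hyperplane[OF g0] by simp
    moreover have "dim {y. g \<bullet> y = 0} \<le> dim D"
      using dim_subset[OF Wsub] by simp
    ultimately have geq: "aff_dim S \<ge> int CARD('n) - 1" using affS by simp
    have lt: "aff_dim S < aff_dim PD" by (rule face_of_aff_dim_lt[OF cvxPD face SneqPD])
    have "aff_dim PD \<le> int CARD('n)" using aff_dim_le_DIM[of PD] by simp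
    hence "aff_dim S = aff_dim PD - 1" using geq lt by linarith
    moreover have "S \<noteq> {}" using z0 by blast
    ultimately show ?thesis using face unfolding facet_of_def S_def by blast
  qed
  show ?thesis using PD0_valid Feq PD_valid facetPD xbar_lt by blast
qed


end
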